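(* Let $C$ be a nondegenerate correlator on the smooth real vector bundle $E\to M$. Then $C$ induces a canonical metric $(\cdot,\cdot)_C$ on $E$ and a connection $\nabla^C$ on $E$ compatible with this metric, described as follows: if $\mathcal O\subset M$ is a coordinate neighborhood with coordinates $(x^i)$ and $\underline e:\underline{\mathbb R}^r_{\mathcal O}\to E|_{\mathcal O}$ is a $(\cdot,\cdot)_C$-orthonormal frame, then in this frame $\nabla^C=d+\sum_i\Gamma_i(\underline e)dx^i$, where the skew-symmetric $r\times r$ matrices are $\Gamma_i(\underline e)_y=-\partial_{x^i}T(\underline e)_{x,y}|_{x=y}$. This is well defined: for any smooth $g:\mathcal O\to O(r)$ one has $\Gamma(\underline e\cdot g)=g^{-1}dg+g^{-1}\Gamma(\underline e)g$, where $\Gamma(\underline e)=\sum_i\Gamma_i(\underline e)dx^i$, so the connections defined via different orthonormal frames coincide.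
   Context: A correlator on $E$ is a smooth section $C$ of $E\boxtimes E$ over $M\times M$, identified with bilinear maps $C_{x,y}:E_x^*\times E_y^*\to\mathbb R$, which is symmetric ($C_{x,y}(u^*,v^* )=C_{y,x}(v^*,u^* )$) with each $C_{x,x}$ nonnegative definite; nondegenerate means each $C_{x,x}$ is positive definite. The metric $(\cdot,\cdot)_C$ on $E$ is the dual of the inner product $C_{x,x}$ on $E_x^*$. The tunneling map $T_{x,y}\in\mathrm{Hom}(E_y,E_x)$ is defined by $\langle u^*,T_{x,y}v\rangle=C_{x,y}(u^*,v^\flat)$, $v^\flat$ the $(\cdot,\cdot)_C$-dual of $v$. For an orthonormal frame $\underline e$, $T(\underline e)_{x,y}:=\underline e(x)^{-1}T_{x,y}\underline e(y)\in\mathrm{End}(\mathbb R^r)$. The expression $d+\Gamma$ acts on $\mathbb R^r$-valued functions (coordinates of sections in the frame) by $s\mapsto ds+\Gamma s$. *)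

theory Defs
  imports "HOL-Analysis.Analysis"
begin

(* Local-coordinate setting: a coordinate neighbourhood U (open in R^n, coordinates indexed by 'n),
   E|_O trivialised as U x R^r (fibre index type 'r). *)

fun Ck_on :: "nat \<Rightarrow> 'a set \<Rightarrow> ('a::euclidean_space \<Rightarrow> 'b::real_normed_vector) \<Rightarrow> bool" where
  "Ck_on 0 S f = continuous_on S f"
| "Ck_on (Suc k) S f = (f differentiable_on S \<and>
      (\<forall>i\<in>Basis. Ck_on k S (\<lambda>x. frechet_derivative f (at x) i)))"

definition smooth_on :: "'a set \<Rightarrow> ('a::euclidean_space \<Rightarrow> 'b::real_normed_vector) \<Rightarrow> bool" where
  "smooth_on S f \<longleftrightarrow> (\<forall>k. Ck_on k S f)"

definition pderiv_coord :: "'n \<Rightarrow> (real^'n \<Rightarrow> 'b::real_normed_vector) \<Rightarrow> real^'n \<Rightarrow> 'b" where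
  "pderiv_coord i f y = vector_derivative (\<lambda>t. f (y + t *\<^sub>R axis i 1)) (at 0)"

text \<open>A correlator on E|_O, in the trivialisation: Cm x y is the matrix of the bilinear map
  C_{x,y} : E_x^* x E_y^* -> R, i.e. C_{x,y}(a,b) = a \<bullet> (Cm x y *v b).\<close>
definition correlator_on :: "(real^'n) set \<Rightarrow> (real^'n \<Rightarrow> real^'n \<Rightarrow> real^'r^'r) \<Rightarrow> bool" where
  "correlator_on U Cm \<longleftrightarrow>
     smooth_on (U \<times> U) (\<lambda>(x,y). Cm x y) \<and>
     (\<forall>x\<in>U. \<forall>y\<in>U. Cm y x = transpose (Cm x y)) \<and>
     (\<forall>x\<in>U. \<forall>u. 0 \<le> u \<bullet> (Cm x x *v u))"

definition nondegenerate_on :: "(real^'n) set \<Rightarrow> (real^'n \<Rightarrow> real^'n \<Rightarrow> real^'r^'r) \<Rightarrow> bool" where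
  "nondegenerate_on U Cm \<longleftrightarrow> (\<forall>x\<in>U. \<forall>u. u \<noteq> 0 \<longrightarrow> 0 < u \<bullet> (Cm x x *v u))"

text \<open>Matrix of the metric (.,.)_C on E_x: dual of the inner product C_{x,x} on E_x^*.\<close>
definition metricC :: "(real^'n \<Rightarrow> real^'n \<Rightarrow> real^'r^'r) \<Rightarrow> real^'n \<Rightarrow> real^'r^'r" where
  "metricC Cm x = matrix_inv (Cm x x)"

definition orthonormal_frame_on ::
  "(real^'n) set \<Rightarrow> (real^'n \<Rightarrow> real^'n \<Rightarrow> real^'r^'r) \<Rightarrow> (real^'n \<Rightarrow> real^'r^'r) \<Rightarrow> bool" where
  "orthonormal_frame_on U Cm e \<longleftrightarrow> smooth_on U e \<and>
     (\<forall>x\<in>U. invertible (e x) \<and> transpose (e x) ** metricC Cm x ** e x = mat 1)"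

text \<open>Tunneling map T_{x,y} : E_y -> E_x, <u*, T v> = C_{x,y}(u*, v^flat).\<close>
definition tunneling :: "(real^'n \<Rightarrow> real^'n \<Rightarrow> real^'r^'r) \<Rightarrow> real^'n \<Rightarrow> real^'n \<Rightarrow> real^'r^'r" where
  "tunneling Cm x y = Cm x y ** metricC Cm y"

definition tunneling_frame ::
  "(real^'n \<Rightarrow> real^'n \<Rightarrow> real^'r^'r) \<Rightarrow> (real^'n \<Rightarrow> real^'r^'r) \<Rightarrow> real^'n \<Rightarrow> real^'n \<Rightarrow> real^'r^'r" where
  "tunneling_frame Cm e x y = matrix_inv (e x) ** tunneling Cm x y ** e y"

definition Gamma ::
  "(real^'n \<Rightarrow> real^'n \<Rightarrow> real^'r^'r) \<Rightarrow> (real^'n \<Rightarrow> real^'r^'r) \<Rightarrow> 'n \<Rightarrow> real^'n \<Rightarrow> real^'r^'r" where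
  "Gamma Cm e i y = - pderiv_coord i (\<lambda>x. tunneling_frame Cm e x y) y"

definition orthogonal_matrix_valued :: "(real^'n) set \<Rightarrow> (real^'n \<Rightarrow> real^'r^'r) \<Rightarrow> bool" where
  "orthogonal_matrix_valued U g \<longleftrightarrow> (\<forall>x\<in>U. transpose (g x) ** g x = mat 1)"

end

theory Submission
  imports Defs
begin

lemma mm_radd: "((A::real^'n^'m) + B) ** (C::real^'k^'n) = A ** C + B ** C"
  by (vector matrix_matrix_mult_def sum.distrib[symmetric] field_simps)

lemma bb_mm: "bounded_bilinear (\<lambda>(A::real^'n^'m) (B::real^'k^'n). A ** B)"
  unfolding bilinear_conv_bounded_bilinear[symmetric] bilinear_def
  by (auto intro!: linearI simp: matrix_add_ldistrib mm_radd matrix_scalar_ac scalar_matrix_assoc)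

lemma bl_transpose: "bounded_linear (transpose :: real^'n^'m \<Rightarrow> real^'m^'n)"
  unfolding linear_conv_bounded_linear[symmetric]
  by (auto intro!: linearI simp: transpose_def vec_eq_iff)

lemma pd_eq:
  assumes "(F has_derivative F') (at y)"
  shows "pderiv_coord i F y = F' (axis i 1)"
proof -
  have "((\<lambda>t. F (y + t *\<^sub>R axis i 1)) has_derivative (\<lambda>t. F' (t *\<^sub>R axis i 1))) (at 0)"
    apply (rule has_derivative_compose[where g=F, unfolded o_def, of "\<lambda>t. y + t *\<^sub>R axis i 1" "\<lambda>t. t *\<^sub>R axis i 1", simplified])
    by (auto intro!: derivative_eq_intros assms)
  moreover have "F' (t *\<^sub>R axis i 1) = t *\<^sub>R F' (axis i 1)" for t
    using assms has_derivative_bounded_linear linear_scale linear_conv_bounded_linear by metis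
  ultimately have "((\<lambda>t. F (y + t *\<^sub>R axis i 1)) has_vector_derivative F' (axis i 1)) (at 0)"
    by (simp add: has_vector_derivative_def)
  then show ?thesis unfolding pderiv_coord_def by (rule vector_derivative_at)
qed

lemma minv:
  assumes "invertible (M::real^'r^'r)"
  shows "M ** matrix_inv M = mat 1" "matrix_inv M ** M = mat 1"
  using someI_ex[OF assms[unfolded invertible_def]] unfolding matrix_inv_def by auto

definition cof :: "'r \<Rightarrow> 'r \<Rightarrow> real^'r^'r \<Rightarrow> real" where
  "cof k j M = det (\<chi> a l. if l = k then axis j 1 $ a else M$a$l)"

lemma minv_cramer:
  assumes "invertible (M::real^'r^'r)"
  shows "matrix_inv M $ k $ j = cof k j M / det M"
proof -
  have d: "det M \<noteq> 0" using assms invertible_det_nz by blast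
  define x where "x = (\<chi> a. matrix_inv M $ a $ j)"
  have "M *v x = axis j 1"
  proof -
    have "(M *v x) $ a = (M ** matrix_inv M) $ a $ j" for a
      by (simp add: x_def matrix_vector_mult_def matrix_matrix_mult_def)
    then show ?thesis using minv(1)[OF assms] by (simp add: vec_eq_iff mat_def axis_def)
  qed
  then have "x = (\<chi> k. cof k j M / det M)"
    unfolding cramer[OF d] cof_def by simp
  then have "x $ k = cof k j M / det M" by simp
  then show ?thesis by (simp add: x_def)
qed

lemma rpf_det:
  assumes "\<And>a l. real_polynomial_function (\<lambda>M. Q M $ a $ l)"
  shows "real_polynomial_function (\<lambda>M. det (Q M :: real^'r^'r))"
  unfolding det_def
  by (intro real_polynomial_function_sum real_polynomial_function.intros(4) real_polynomial_function.intros(2)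
       real_polynomial_function_prod assms) auto

lemma rpf_entry: "real_polynomial_function (\<lambda>M::real^'r^'r. M $ a $ l)"
proof -
  have "bounded_linear (\<lambda>M::real^'r^'r. M $ a $ l)"
    using bounded_linear_compose[OF bounded_linear_vec_nth[of l] bounded_linear_vec_nth[of a]] .
  then show ?thesis by (rule real_polynomial_function.intros(1))
qed

lemma rpf_cof: "real_polynomial_function (cof k j :: real^'r^'r \<Rightarrow> real)"
proof -
  have "real_polynomial_function (\<lambda>M::real^'r^'r. (\<chi> a l. if l = k then axis j 1 $ a else M$a$l) $ a $ l)" for a l
    by (cases "l = k") (auto intro: rpf_entry real_polynomial_function.intros(2))
  then show ?thesis unfolding cof_def[abs_def] by (rule rpf_det)
qed

lemma rpf_det1: "real_polynomial_function (det :: real^'r^'r \<Rightarrow> real)"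
  using rpf_det[of "\<lambda>M. M", OF rpf_entry] by simp

lemma sum_axis_matrix: "(\<Sum>k\<in>UNIV. \<Sum>j\<in>UNIV. (f k j :: real) *\<^sub>R axis k (axis j (1::real))) = (\<chi> k j. f k j)"
proof -
  have "(\<Sum>k\<in>UNIV. \<Sum>j\<in>UNIV. (f k j :: real) *\<^sub>R axis k (axis j (1::real))) $ a $ b = f a b" for a b
  proof -
    have "(\<Sum>k\<in>UNIV. \<Sum>j\<in>UNIV. (f k j :: real) *\<^sub>R axis k (axis j (1::real))) $ a $ b
       = (\<Sum>k\<in>UNIV. \<Sum>j\<in>UNIV. (f k j *\<^sub>R axis k (axis j (1::real))) $ a $ b)"
      by (simp add: sum_component)
    also have "\<dots> = (\<Sum>k\<in>UNIV. (if k = a then (\<Sum>j\<in>UNIV. (if j = b then f k j else 0)) else 0))"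
      by (intro sum.cong refl) (auto simp: axis_def if_distrib cong: if_cong)
    also have "\<dots> = f a b"
      by simp
    finally show ?thesis .
  qed
  then show ?thesis by (simp add: vec_eq_iff)
qed

lemma minv_differentiable:
  assumes "invertible (M0::real^'r^'r)"
  shows "matrix_inv differentiable (at M0)"
proof -
  define S where "S = {M::real^'r^'r. det M \<noteq> 0}"
  have cd: "continuous_on UNIV (det :: real^'r^'r \<Rightarrow> real)"
    using differentiable_imp_continuous_on differentiable_on_real_polynomial_function[OF rpf_det1] by blast
  have oS: "open S" unfolding S_def
    by (rule open_Collect_neq) (auto intro: cd continuous_on_const)
  have M0S: "M0 \<in> S" using assms invertible_det_nz S_def by blast
  define h where "h M = (\<Sum>k\<in>UNIV. \<Sum>j\<in>UNIV. (cof k j M / det M) *\<^sub>R axis k (axis j (1::real)))" for M :: "real^'r^'r"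
  have "h differentiable (at M0)"
    unfolding h_def using M0S S_def
    by (intro differentiable_sum ballI differentiable_scaleR differentiable_divide
          differentiable_at_real_polynomial_function rpf_cof rpf_det1 differentiable_const) auto
  then obtain D where D: "(h has_derivative D) (at M0)" unfolding differentiable_def by blast
  have eq: "h M = matrix_inv M" if "M \<in> S" for M
  proof -
    have "invertible M" using that S_def invertible_det_nz by blast
    then show ?thesis unfolding h_def sum_axis_matrix by (simp add: vec_eq_iff minv_cramer)
  qed
  show ?thesis unfolding differentiable_def
    using has_derivative_transform_within_open[OF D oS M0S eq] by blast
qed

lemma fd_eq_open:
  assumes "open S" "x \<in> S" "\<forall>x\<in>S. f x = g x" "f differentiable (at x)"
  shows "g differentiable (at x)" "frechet_derivative g (at x) = frechet_derivative f (at x)"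
proof -
  have f: "(f has_derivative frechet_derivative f (at x)) (at x)"
    using assms(4) frechet_derivative_works by blast
  have g: "(g has_derivative frechet_derivative f (at x)) (at x)"
    using has_derivative_transform_within_open[OF f assms(1,2)] assms(3) by blast
  show "g differentiable (at x)" using g differentiable_def by blast
  show "frechet_derivative g (at x) = frechet_derivative f (at x)"
    using frechet_derivative_at[OF g] by simp
qed

lemma Ck_cong:
  assumes "open S" "\<forall>x\<in>S. f x = g x" "Ck_on k S f"
  shows "Ck_on k S g"
  using assms(2,3)
proof (induction k arbitrary: f g)
  case 0
  then show ?case using continuous_on_cong by (metis Ck_on.simps(1))
next
  case (Suc k)
  have df: "\<forall>x\<in>S. f differentiable (at x)"
    using Suc.prems(2) differentiable_on_eq_differentiable_at[OF assms(1)] by auto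
  have dg: "\<forall>x\<in>S. g differentiable (at x)"
    using fd_eq_open(1)[OF assms(1) _ Suc.prems(1)] df by blast
  have fe: "\<forall>x\<in>S. frechet_derivative g (at x) = frechet_derivative f (at x)"
    using fd_eq_open(2)[OF assms(1) _ Suc.prems(1)] df by blast
  show ?case
    using Suc.prems(2) dg fe differentiable_on_eq_differentiable_at[OF assms(1)]
    by (auto intro: Suc.IH[rotated])
qed

lemma Ck_mono: "Ck_on (Suc k) S f \<Longrightarrow> Ck_on k S f"
proof (induction k arbitrary: f)
  case 0
  then show ?case by (simp add: differentiable_imp_continuous_on)
next
  case (Suc k)
  then show ?case by simp
qed

lemma Ck_add:
  fixes f g :: "'a::euclidean_space \<Rightarrow> 'b::real_normed_vector"
  assumes "open S"
  shows "Ck_on k S f \<Longrightarrow> Ck_on k S g \<Longrightarrow> Ck_on k S (\<lambda>x. f x + g x)"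
proof (induction k arbitrary: f g)
  case 0
  then show ?case by (simp add: continuous_on_add)
next
  case (Suc k)
  have df: "\<forall>x\<in>S. f differentiable (at x)" "\<forall>x\<in>S. g differentiable (at x)"
    using Suc.prems differentiable_on_eq_differentiable_at[OF assms(1)] by auto
  have fe: "frechet_derivative (\<lambda>x. f x + g x) (at x) i
      = frechet_derivative f (at x) i + frechet_derivative g (at x) i" if "x \<in> S" for x i
  proof -
    have "((\<lambda>x. f x + g x) has_derivative (\<lambda>h. frechet_derivative f (at x) h + frechet_derivative g (at x) h)) (at x)"
      using df that frechet_derivative_works by (blast intro: has_derivative_add)
    then have "(\<lambda>h. frechet_derivative f (at x) h + frechet_derivative g (at x) h) = frechet_derivative (\<lambda>x. f x + g x) (at x)"
      by (rule frechet_derivative_at)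
    from fun_cong[OF this, of i] show ?thesis by simp
  qed
  have cs: "Ck_on k S (\<lambda>x. frechet_derivative f (at x) i + frechet_derivative g (at x) i)" if "i \<in> Basis" for i
    using Suc that by auto
  have "Ck_on k S (\<lambda>x. frechet_derivative (\<lambda>x. f x + g x) (at x) i)" if "i \<in> Basis" for i
  proof (rule Ck_cong[OF assms(1), rotated])
    show "Ck_on k S (\<lambda>x. frechet_derivative f (at x) i + frechet_derivative g (at x) i)"
      using cs[OF that] .
    show "\<forall>x\<in>S. frechet_derivative f (at x) i + frechet_derivative g (at x) i
        = frechet_derivative (\<lambda>x. f x + g x) (at x) i" using fe by simp
  qed
  moreover have "(\<lambda>x. f x + g x) differentiable_on S"
    using df differentiable_on_eq_differentiable_at[OF assms(1)] differentiable_add by blast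
  ultimately show ?case by (subst Ck_on.simps(2)) blast
qed

lemma Ck_bil:
  fixes f :: "'a::euclidean_space \<Rightarrow> 'b::real_normed_vector"
    and g :: "'a \<Rightarrow> 'c::real_normed_vector"
  assumes bb: "bounded_bilinear (P :: 'b \<Rightarrow> 'c \<Rightarrow> 'd::real_normed_vector)" and "open S"
  shows "Ck_on k S f \<Longrightarrow> Ck_on k S g \<Longrightarrow> Ck_on k S (\<lambda>x. P (f x) (g x))"
proof (induction k arbitrary: f g)
  case 0
  then show ?case using bounded_bilinear.continuous_on[OF bb, of S f g] by simp
next
  case (Suc k)
  have df: "\<forall>x\<in>S. f differentiable (at x)" "\<forall>x\<in>S. g differentiable (at x)"
    using Suc.prems differentiable_on_eq_differentiable_at[OF assms(2)] by auto
  have fe: "frechet_derivative (\<lambda>x. P (f x) (g x)) (at x) i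
      = P (f x) (frechet_derivative g (at x) i) + P (frechet_derivative f (at x) i) (g x)" if "x \<in> S" for x i
  proof -
    have a: "(f has_derivative frechet_derivative f (at x)) (at x)"
      using df(1) that frechet_derivative_works by blast
    have b: "(g has_derivative frechet_derivative g (at x)) (at x)"
      using df(2) that frechet_derivative_works by blast
    have "((\<lambda>x. P (f x) (g x)) has_derivative (\<lambda>h. P (f x) (frechet_derivative g (at x) h) + P (frechet_derivative f (at x) h) (g x))) (at x)"
      by (rule bounded_bilinear.FDERIV[OF bb a b])
    then have "(\<lambda>h. P (f x) (frechet_derivative g (at x) h) + P (frechet_derivative f (at x) h) (g x)) = frechet_derivative (\<lambda>x. P (f x) (g x)) (at x)"
      by (rule frechet_derivative_at)
    from fun_cong[OF this, of i] show ?thesis by simp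
  qed
  have cs: "Ck_on k S (\<lambda>x. P (f x) (frechet_derivative g (at x) i) + P (frechet_derivative f (at x) i) (g x))" if "i \<in> Basis" for i
  proof (rule Ck_add[OF assms(2)])
    have "Ck_on k S (\<lambda>x. frechet_derivative g (at x) i)" using Suc.prems(2) that by simp
    then show "Ck_on k S (\<lambda>x. P (f x) (frechet_derivative g (at x) i))"
      by (rule Suc.IH[OF Ck_mono[OF Suc.prems(1)]])
    have "Ck_on k S (\<lambda>x. frechet_derivative f (at x) i)" using Suc.prems(1) that by simp
    then show "Ck_on k S (\<lambda>x. P (frechet_derivative f (at x) i) (g x))"
      by (rule Suc.IH[OF _ Ck_mono[OF Suc.prems(2)]])
  qed
  have "Ck_on k S (\<lambda>x. frechet_derivative (\<lambda>x. P (f x) (g x)) (at x) i)" if "i \<in> Basis" for i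
  proof (rule Ck_cong[OF assms(2), rotated])
    show "Ck_on k S (\<lambda>x. P (f x) (frechet_derivative g (at x) i) + P (frechet_derivative f (at x) i) (g x))"
      using cs[OF that] .
    show "\<forall>x\<in>S. P (f x) (frechet_derivative g (at x) i) + P (frechet_derivative f (at x) i) (g x)
        = frechet_derivative (\<lambda>x. P (f x) (g x)) (at x) i" using fe by simp
  qed
  moreover have "(\<lambda>x. P (f x) (g x)) differentiable_on S"
    unfolding differentiable_on_eq_differentiable_at[OF assms(2)]
  proof
    fix x assume x: "x \<in> S"
    have a: "(f has_derivative frechet_derivative f (at x)) (at x)"
      using df(1) x frechet_derivative_works by blast
    have b: "(g has_derivative frechet_derivative g (at x)) (at x)"
      using df(2) x frechet_derivative_works by blast
    show "(\<lambda>x. P (f x) (g x)) differentiable (at x)"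
      by (rule differentiableI[OF bounded_bilinear.FDERIV[OF bb a b]])
  qed
  ultimately show ?case by (subst Ck_on.simps(2)) blast
qed

lemma inv_unique:
  assumes "(B::real^'r^'r) ** M = mat 1"
  shows "matrix_inv M = B" "invertible M"
proof -
  show im: "invertible M" using assms invertible_left_inverse by blast
  have "B = B ** (M ** matrix_inv M)" using minv(1)[OF im] by simp
  also have "\<dots> = matrix_inv M" by (simp add: matrix_mul_assoc assms)
  finally show "matrix_inv M = B" by simp
qed

lemma transpose_add: "transpose ((A::real^'n^'m) + B) = transpose A + transpose B"
  using bl_transpose linear_add linear_conv_bounded_linear by metis

lemma transpose_diff: "transpose ((A::real^'n^'m) - B) = transpose A - transpose B"
  using bl_transpose linear_diff linear_conv_bounded_linear by metis

lemma transpose_minus: "transpose (- (A::real^'n^'m)) = - transpose A"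
  using bl_transpose linear_neg linear_conv_bounded_linear by metis

lemma mm_minus_left: "(- (A::real^'n^'m)) ** (B::real^'k^'n) = - (A ** B)"
  using bounded_bilinear.minus_left[OF bb_mm] .

lemma mm_diff_left: "((A::real^'n^'m) - B) ** (C::real^'k^'n) = A ** C - B ** C"
  using bounded_bilinear.diff_left[OF bb_mm] .

lemma mm_minus_right: "(A::real^'n^'m) ** (- (B::real^'k^'n)) = - (A ** B)"
  using bounded_bilinear.minus_right[OF bb_mm] .

lemma mv_minus: "(- (A::real^'n^'m)) *v x = - (A *v x)"
  by (simp add: vec_eq_iff matrix_vector_mult_def sum_negf)

lemma pd_open:
  assumes "open U" "y \<in> U" "(F has_derivative F') (at y)" "\<forall>x\<in>U. F x = G x"
  shows "pderiv_coord i G y = F' (axis i 1)"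
  using has_derivative_transform_within_open[OF assms(3,1,2)] assms(4) pd_eq by blast

lemma deriv_const_open:
  assumes "open U" "y \<in> U" "(F has_derivative F') (at y)" "\<forall>x\<in>U. F x = c"
  shows "F' h = 0"
proof -
  have "(F has_derivative (\<lambda>_. 0)) (at y)"
    using has_derivative_transform_within_open[OF has_derivative_const assms(1,2)] assms(4) by metis
  then have "F' = (\<lambda>_. 0)" using has_derivative_unique assms(3) by blast
  then show ?thesis by simp
qed

theorem proposition2p1:
  fixes U :: "(real^'n) set"
    and Cm :: "real^'n \<Rightarrow> real^'n \<Rightarrow> real^'r^'r"
    and e :: "real^'n \<Rightarrow> real^'r^'r"
  assumes "open U"
    and "correlator_on U Cm"
    and "nondegenerate_on U Cm"
    and "orthonormal_frame_on U Cm e"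
  shows
    "(\<forall>i. \<forall>y\<in>U. transpose (Gamma Cm e i y) = - Gamma Cm e i y)
     \<and> (\<forall>s t. smooth_on U s \<and> smooth_on U t \<longrightarrow>
          (\<forall>i. \<forall>y\<in>U. pderiv_coord i (\<lambda>x. s x \<bullet> t x) y =
              (pderiv_coord i s y + Gamma Cm e i y *v s y) \<bullet> t y
              + s y \<bullet> (pderiv_coord i t y + Gamma Cm e i y *v t y)))
     \<and> (\<forall>g. smooth_on U g \<and> orthogonal_matrix_valued U g \<longrightarrow>
          orthonormal_frame_on U Cm (\<lambda>x. e x ** g x) \<and>
          (\<forall>i. \<forall>y\<in>U. Gamma Cm (\<lambda>x. e x ** g x) i y =
              matrix_inv (g y) ** pderiv_coord i g y
              + matrix_inv (g y) ** Gamma Cm e i y ** g y))"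
proof -
  note U = assms(1)
  have sm: "smooth_on (U \<times> U) (\<lambda>(x,y). Cm x y)"
    and sym: "\<forall>x\<in>U. \<forall>y\<in>U. Cm y x = transpose (Cm x y)"
    using assms(2) unfolding correlator_on_def by blast+
  have esm: "smooth_on U e" and einv: "\<forall>x\<in>U. invertible (e x)"
    and eorth: "\<forall>x\<in>U. transpose (e x) ** metricC Cm x ** e x = mat 1"
    using assms(4) unfolding orthonormal_frame_on_def by blast+
  define A where "A x = matrix_inv (e x)" for x
  have Ae: "A x ** e x = mat 1" and eA: "e x ** A x = mat 1" if "x \<in> U" for x
    using minv[OF einv[rule_format, OF that]] unfolding A_def by auto
  have Ge: "metricC Cm x ** e x = transpose (A x)" if x: "x \<in> U" for x
  proof -
    have "transpose (A x) = transpose (A x) ** (transpose (e x) ** metricC Cm x ** e x)"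
      using eorth x by simp
    also have "\<dots> = transpose (e x ** A x) ** (metricC Cm x ** e x)"
      by (simp add: matrix_mul_assoc matrix_transpose_mul)
    also have "\<dots> = metricC Cm x ** e x" using eA[OF x] by simp
    finally show ?thesis by simp
  qed
  have Cinv: "invertible (Cm x x)" if x: "x \<in> U" for x
  proof -
    have "\<forall>u. Cm x x *v u = 0 \<longrightarrow> u = 0"
    proof (intro allI impI)
      fix u assume h: "Cm x x *v u = 0"
      show "u = 0"
      proof (rule ccontr)
        assume "u \<noteq> 0"
        then have "0 < u \<bullet> (Cm x x *v u)" using assms(3) x unfolding nondegenerate_on_def by blast
        with h show False by simp
      qed
    qed
    then have "\<exists>B::real^'r^'r. B ** Cm x x = mat 1" by (simp only: matrix_left_invertible_ker)
    then show ?thesis by (simp only: invertible_left_inverse)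
  qed
  have ACA: "A x ** Cm x x ** transpose (A x) = mat 1" if x: "x \<in> U" for x
  proof -
    have CG: "Cm x x ** metricC Cm x = mat 1" unfolding metricC_def using minv(1)[OF Cinv[OF x]] .
    have G: "metricC Cm x = transpose (A x) ** A x"
    proof -
      have "metricC Cm x = metricC Cm x ** (e x ** A x)" using eA[OF x] by simp
      also have "\<dots> = transpose (A x) ** A x" using Ge[OF x] by (simp add: matrix_mul_assoc)
      finally show ?thesis .
    qed
    have "A x ** Cm x x ** transpose (A x) = A x ** Cm x x ** transpose (A x) ** (A x ** e x)"
      using Ae[OF x] by simp
    also have "\<dots> = A x ** (Cm x x ** (transpose (A x) ** A x)) ** e x"
      by (simp add: matrix_mul_assoc)
    also have "\<dots> = mat 1" using CG G Ae[OF x] by simp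
    finally show ?thesis .
  qed
  have TF: "tunneling_frame Cm e x y = A x ** Cm x y ** transpose (A y)" if "y \<in> U" for x y
    unfolding tunneling_frame_def tunneling_def A_def[symmetric]
    using Ge[OF that] by (simp add: matrix_mul_assoc[symmetric])
  have Cd: "(\<lambda>p. Cm (fst p) (snd p)) differentiable (at (x,y))" if "x \<in> U" "y \<in> U" for x y
  proof -
    have "Ck_on (Suc 0) (U \<times> U) (\<lambda>(x,y). Cm x y)" using sm unfolding smooth_on_def by blast
    then have "(\<lambda>p. Cm (fst p) (snd p)) differentiable_on (U \<times> U)" by (simp add: case_prod_unfold)
    then have "\<forall>z\<in>U \<times> U. (\<lambda>p. Cm (fst p) (snd p)) differentiable (at z)"
      by (subst (asm) differentiable_on_eq_differentiable_at[OF open_Times[OF U U]])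
    moreover have "(x,y) \<in> U \<times> U" using that by simp
    ultimately show ?thesis by blast
  qed
  have diffU: "f differentiable (at x)" if "smooth_on U f" "x \<in> U" for f :: "real^'n \<Rightarrow> 'z::real_normed_vector" and x
  proof -
    have "Ck_on (Suc 0) U f" using that unfolding smooth_on_def by blast
    then have "f differentiable_on U" by simp
    then show ?thesis using differentiable_on_eq_differentiable_at[OF U] that by blast
  qed
  have Ad: "A differentiable (at x)" if "x \<in> U" for x
  proof -
    have "(matrix_inv \<circ> e) differentiable (at x)"
      by (rule differentiable_chain_at[OF diffU[OF esm that] minv_differentiable[OF einv[rule_format, OF that]]])
    then show ?thesis by (simp add: A_def[abs_def] o_def)
  qed
  have BL: "bounded_linear (transpose :: real^'r^'r \<Rightarrow> real^'r^'r)" by (rule bl_transpose)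

  have main: "transpose (Gamma Cm e i y) = - Gamma Cm e i y \<and>
     (\<forall>g. smooth_on U g \<and> orthogonal_matrix_valued U g \<longrightarrow>
        Gamma Cm (\<lambda>x. e x ** g x) i y =
              matrix_inv (g y) ** pderiv_coord i g y
              + matrix_inv (g y) ** Gamma Cm e i y ** g y)"
    if y: "y \<in> U" for y i
  proof -
    obtain DA where DA: "(A has_derivative DA) (at y)" using Ad[OF y] differentiable_def by blast
    obtain DH where DH: "((\<lambda>p. Cm (fst p) (snd p)) has_derivative DH) (at (y,y))"
      using Cd[OF y y] differentiable_def by blast
    define v where "v = axis i (1::real)"
    have pr1: "((\<lambda>x. (x, y)) has_derivative (\<lambda>w. (w, 0))) (at y)"
      by (auto intro!: derivative_eq_intros)
    have pr2: "((\<lambda>x. (x, x)) has_derivative (\<lambda>w. (w, w))) (at y)"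
      by (auto intro!: derivative_eq_intros)
    have pr3: "((\<lambda>x. (y, x)) has_derivative (\<lambda>w. (0, w))) (at y)"
      by (auto intro!: derivative_eq_intros)
    have d1: "((\<lambda>x. Cm x y) has_derivative (\<lambda>w. DH (w, 0))) (at y)"
      using has_derivative_compose[OF pr1, of "\<lambda>p. Cm (fst p) (snd p)" DH] DH by simp
    have d2: "((\<lambda>x. Cm x x) has_derivative (\<lambda>w. DH (w, w))) (at y)"
      using has_derivative_compose[OF pr2, of "\<lambda>p. Cm (fst p) (snd p)" DH] DH by simp
    have d3: "((\<lambda>x. Cm y x) has_derivative (\<lambda>w. DH (0, w))) (at y)"
      using has_derivative_compose[OF pr3, of "\<lambda>p. Cm (fst p) (snd p)" DH] DH by simp
    have d4: "((\<lambda>x. transpose (Cm x y)) has_derivative (\<lambda>w. transpose (DH (w, 0)))) (at y)"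
      using bounded_linear.has_derivative[OF BL d1] .
    have d3': "((\<lambda>x. Cm y x) has_derivative (\<lambda>w. transpose (DH (w, 0)))) (at y)"
      using has_derivative_transform_within_open[OF d4 U y] sym y by metis
    have h21: "DH (0, w) = transpose (DH (w, 0))" for w
      using has_derivative_unique[OF d3 d3'] by metis
    have DHlin: "DH (w, w) = DH (w, 0) + DH (0, w)" for w
    proof -
      have "linear DH" using has_derivative_bounded_linear[OF DH] linear_conv_bounded_linear by blast
      then have "DH ((w, 0) + (0, w)) = DH (w, 0) + DH (0, w)" by (rule linear_add)
      then show ?thesis by simp
    qed
    have P1: "((\<lambda>x. A x ** Cm x y) has_derivative (\<lambda>w. A y ** DH (w, 0) + DA w ** Cm y y)) (at y)"
      by (rule bounded_bilinear.FDERIV[OF bb_mm DA d1])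
    have P3: "((\<lambda>x. A x ** Cm x y ** transpose (A y)) has_derivative
        (\<lambda>w. (A y ** DH (w, 0) + DA w ** Cm y y) ** transpose (A y))) (at y)"
      using bounded_bilinear.FDERIV[OF bb_mm P1 has_derivative_const[of "transpose (A y)"]] by simp
    have P2: "((\<lambda>x. A x ** Cm x x ** transpose (A x)) has_derivative
        (\<lambda>w. (A y ** Cm y y) ** transpose (DA w) + (A y ** DH (w, w) + DA w ** Cm y y) ** transpose (A y))) (at y)"
      by (rule bounded_bilinear.FDERIV[OF bb_mm bounded_bilinear.FDERIV[OF bb_mm DA d2] bounded_linear.has_derivative[OF BL DA]])
    have Z: "(A y ** Cm y y) ** transpose (DA v) + (A y ** (DH (v, 0) + transpose (DH (v, 0))) + DA v ** Cm y y) ** transpose (A y) = 0"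
      using deriv_const_open[OF U y P2, of "mat 1" v] ACA DHlin h21 by simp
    have TFe: "(\<lambda>x. tunneling_frame Cm e x y) = (\<lambda>x. A x ** Cm x y ** transpose (A y))"
      using TF[OF y] by simp
    have G: "Gamma Cm e i y = - ((A y ** DH (v, 0) + DA v ** Cm y y) ** transpose (A y))"
      unfolding Gamma_def TFe pd_eq[OF P3] v_def ..
    have hT: "transpose (Cm y y) = Cm y y" using sym y by metis
    have skew: "transpose (Gamma Cm e i y) = - Gamma Cm e i y"
      using Z unfolding G
      apply (simp add: transpose_minus transpose_diff matrix_transpose_mul transpose_add hT matrix_add_ldistrib mm_radd
          matrix_mul_assoc mm_minus_left mm_minus_right algebra_simps eq_neg_iff_add_eq_0)
      by (simp add: neg_eq_iff_add_eq_0)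
    have part3: "Gamma Cm (\<lambda>x. e x ** g x) i y =
              matrix_inv (g y) ** pderiv_coord i g y
              + matrix_inv (g y) ** Gamma Cm e i y ** g y"
      if gs: "smooth_on U g" and go: "orthogonal_matrix_valued U g" for g
    proof -
      have gorth: "transpose (g x) ** g x = mat 1" if "x \<in> U" for x
        using go that unfolding orthogonal_matrix_valued_def by blast
      have ginv: "matrix_inv (g x) = transpose (g x)" if "x \<in> U" for x
        using inv_unique(1)[OF gorth[OF that]] .
      have invEG: "matrix_inv (e x ** g x) = transpose (g x) ** A x" if x: "x \<in> U" for x
      proof (rule inv_unique(1))
        have "(transpose (g x) ** A x) ** (e x ** g x) = transpose (g x) ** (A x ** e x) ** g x"
          by (simp add: matrix_mul_assoc)
        then show "(transpose (g x) ** A x) ** (e x ** g x) = mat 1" using Ae[OF x] gorth[OF x] by simp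
      qed
      have TF2: "tunneling_frame Cm (\<lambda>x. e x ** g x) x y = transpose (g x) ** (A x ** Cm x y ** transpose (A y)) ** g y"
        if x: "x \<in> U" for x
      proof -
        have "tunneling_frame Cm (\<lambda>x. e x ** g x) x y = transpose (g x) ** tunneling_frame Cm e x y ** g y"
          unfolding tunneling_frame_def using invEG[OF x] by (simp add: A_def matrix_mul_assoc)
        then show ?thesis using TF[OF y] by simp
      qed
      obtain Dg where Dg: "(g has_derivative Dg) (at y)" using diffU[OF gs y] differentiable_def by blast
      have TG: "((\<lambda>x. transpose (g x)) has_derivative (\<lambda>w. transpose (Dg w))) (at y)"
        using bounded_linear.has_derivative[OF BL Dg] .
      have P4: "((\<lambda>x. transpose (g x) ** (A x ** Cm x y ** transpose (A y)) ** g y) has_derivative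
          (\<lambda>w. (transpose (g y) ** ((A y ** DH (w, 0) + DA w ** Cm y y) ** transpose (A y))
               + transpose (Dg w) ** (A y ** Cm y y ** transpose (A y))) ** g y)) (at y)"
        using bounded_bilinear.FDERIV[OF bb_mm bounded_bilinear.FDERIV[OF bb_mm TG P3] has_derivative_const[of "g y"]]
        by simp
      have P5: "((\<lambda>x. transpose (g x) ** g x) has_derivative (\<lambda>w. transpose (g y) ** Dg w + transpose (Dg w) ** g y)) (at y)"
        by (rule bounded_bilinear.FDERIV[OF bb_mm TG Dg])
      have gz: "transpose (g y) ** Dg v + transpose (Dg v) ** g y = 0"
        using deriv_const_open[OF U y P5, of "mat 1" v] gorth by simp
      have pg: "pderiv_coord i g y = Dg v" unfolding v_def by (rule pd_eq[OF Dg])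
      have G2: "Gamma Cm (\<lambda>x. e x ** g x) i y
          = - ((transpose (g y) ** ((A y ** DH (v, 0) + DA v ** Cm y y) ** transpose (A y))
               + transpose (Dg v) ** (A y ** Cm y y ** transpose (A y))) ** g y)"
        unfolding Gamma_def v_def using pd_open[OF U y P4, of "\<lambda>x. tunneling_frame Cm (\<lambda>x. e x ** g x) x y" i] TF2
        by simp
      have DT: "(A y ** DH (v, 0) + DA v ** Cm y y) ** transpose (A y) = - Gamma Cm e i y" using G by simp
      have "- (transpose (Dg v) ** g y) = transpose (g y) ** Dg v" using gz
        by (simp add: neg_eq_iff_add_eq_0 add.commute)
      then show ?thesis unfolding G2 DT ginv[OF y] pg ACA[OF y]
        by (simp add: mm_radd mm_diff_left mm_minus_left mm_minus_right matrix_mul_assoc)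
    qed
    show ?thesis using skew part3 by blast
  qed
  have part2: "pderiv_coord i (\<lambda>x. s x \<bullet> t x) y =
              (pderiv_coord i s y + Gamma Cm e i y *v s y) \<bullet> t y
              + s y \<bullet> (pderiv_coord i t y + Gamma Cm e i y *v t y)"
    if ss: "smooth_on U s" and ts: "smooth_on U t" and y: "y \<in> U" for s t :: "real^'n \<Rightarrow> real^'r" and i y
  proof -
    obtain Ds where Ds: "(s has_derivative Ds) (at y)" using diffU[OF ss y] differentiable_def by blast
    obtain Dt where Dt: "(t has_derivative Dt) (at y)" using diffU[OF ts y] differentiable_def by blast
    have Pst: "((\<lambda>x. s x \<bullet> t x) has_derivative (\<lambda>h. s y \<bullet> Dt h + Ds h \<bullet> t y)) (at y)"
      by (rule has_derivative_inner[OF Ds Dt])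
    let ?G = "Gamma Cm e i y"
    have "(?G *v s y) \<bullet> t y = s y \<bullet> (transpose ?G *v t y)"
      by (metis dot_lmul_matrix vector_transpose_matrix)
    also have "\<dots> = - (s y \<bullet> (?G *v t y))"
      using main[OF y, of i] by (simp add: mv_minus)
    finally have "(?G *v s y) \<bullet> t y + s y \<bullet> (?G *v t y) = 0" by simp
    then show ?thesis unfolding pd_eq[OF Pst] pd_eq[OF Ds] pd_eq[OF Dt]
      by (simp add: inner_add_left inner_add_right inner_commute algebra_simps)
  qed
  have part3o: "orthonormal_frame_on U Cm (\<lambda>x. e x ** g x)"
    if gs: "smooth_on U g" and go: "orthogonal_matrix_valued U g" for g
  proof -
    have gorth: "transpose (g x) ** g x = mat 1" if "x \<in> U" for x
      using go that unfolding orthogonal_matrix_valued_def by blast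
    have "smooth_on U (\<lambda>x. e x ** g x)"
      using esm gs unfolding smooth_on_def by (blast intro: Ck_bil[OF bb_mm U])
    moreover have "invertible (e x ** g x)" if x: "x \<in> U" for x
      using invertible_mult einv x inv_unique(2)[OF gorth[OF x]] by blast
    moreover have "transpose (e x ** g x) ** metricC Cm x ** (e x ** g x) = mat 1" if x: "x \<in> U" for x
    proof -
      have "transpose (e x ** g x) ** metricC Cm x ** (e x ** g x)
          = transpose (g x) ** (transpose (e x) ** metricC Cm x ** e x) ** g x"
        by (simp add: matrix_transpose_mul matrix_mul_assoc)
      then show ?thesis using eorth x gorth[OF x] by simp
    qed
    ultimately show ?thesis unfolding orthonormal_frame_on_def by blast
  qed
  show ?thesis using main part2 part3o by blast
qed

end
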